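(* Let $m_{11},m_{12},m_{13}\in k$ with $(m_{11},m_{12},m_{13})\neq0$ and $m_{12}l_1^2+m_{13}l_2^2=m_{11}$ where $l_1=l_2=0$, and let $M=\begin{pmatrix}m_{11}&m_{12}&m_{13}\\ l_1m_{11}&l_1m_{12}&l_1m_{13}\\ l_2m_{11}&l_2m_{12}&l_2m_{13}\end{pmatrix}$. Then: (1) if $m_{12}\neq0$ and $m_{13}\neq0$, then $\mathcal{A}_{\mathcal{O}_{-1}(k^3)}(M)\cong\mathcal{A}_{\mathcal{O}_{-1}(k^3)}(E_{12}+E_{13})$; (2) if $m_{13}=0,m_{12}\neq0$, or $m_{12}=0,m_{13}\neq0$, then $\mathcal{A}_{\mathcal{O}_{-1}(k^3)}(M)\cong\mathcal{A}_{\mathcal{O}_{-1}(k^3)}(E_{12})$.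
   Context: $k$ is an algebraically closed field of characteristic zero. $E_{ij}$ denotes the $3\times3$ matrix unit with $1$ in position $(i,j)$ and $0$ elsewhere. For $M=(m_{ij})\in M_3(k)$, $\mathcal{A}_{\mathcal{O}_{-1}(k^3)}(M)$ is the connected cochain DG algebra whose underlying graded algebra is generated by degree-one $x_1,x_2,x_3$ subject to $x_ix_j=-x_jx_i$ ($i<j$), with differential determined by $\partial(x_i)=\sum_j m_{ij}x_j^2$ and the Leibniz rule; $\cong$ means isomorphism of DG algebras. *)

theory Defs
  imports "HOL-Computational_Algebra.Polynomial"
begin

text \<open>The skew polynomial algebra O_{-1}(k^3) is modelled concretely: an element is a
finitely supported function from exponent triples (a1,a2,a3) (standing for the ordered
monomial x1^a1 x2^a2 x3^a3) to the field.\<close>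

type_synonym mono = "nat \<times> nat \<times> nat"
type_synonym 'a skw = "mono \<Rightarrow> 'a"

definition skw_carrier :: "'a::field skw set" where
  "skw_carrier = {p. finite {a. p a \<noteq> 0}}"

fun mdeg :: "mono \<Rightarrow> nat" where
  "mdeg (a1, a2, a3) = a1 + a2 + a3"

text \<open>Sign arising from (x^a)(x^b) = sign * x^(a+b) using x_i x_j = - x_j x_i (i<j).\<close>
fun msign_exp :: "mono \<Rightarrow> mono \<Rightarrow> nat" where
  "msign_exp (a1, a2, a3) (b1, b2, b3) = b1 * a2 + b1 * a3 + b2 * a3"

definition skw_mult :: "'a::field skw \<Rightarrow> 'a skw \<Rightarrow> 'a skw" where
  "skw_mult p q = (\<lambda>(m1, m2, m3).
     \<Sum>a1\<le>m1. \<Sum>a2\<le>m2. \<Sum>a3\<le>m3.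
       (-1) ^ msign_exp (a1, a2, a3) (m1 - a1, m2 - a2, m3 - a3)
       * p (a1, a2, a3) * q (m1 - a1, m2 - a2, m3 - a3))"

definition skw_one :: "'a::field skw" where
  "skw_one = (\<lambda>m. if m = (0, 0, 0) then 1 else 0)"

definition skw_add :: "'a::field skw \<Rightarrow> 'a skw \<Rightarrow> 'a skw" where
  "skw_add p q = (\<lambda>m. p m + q m)"

definition skw_smult :: "'a::field \<Rightarrow> 'a skw \<Rightarrow> 'a skw" where
  "skw_smult c p = (\<lambda>m. c * p m)"

definition skw_gen :: "nat \<Rightarrow> 'a::field skw" where
  "skw_gen i = (\<lambda>m. if (i = 1 \<and> m = (1, 0, 0)) \<or> (i = 2 \<and> m = (0, 1, 0))
                       \<or> (i = 3 \<and> m = (0, 0, 1)) then 1 else 0)"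

definition skw_homog :: "nat \<Rightarrow> 'a::field skw set" where
  "skw_homog n = {p \<in> skw_carrier. \<forall>a. p a \<noteq> 0 \<longrightarrow> mdeg a = n}"

text \<open>Matrices are functions on indices 1..3; E i j is the matrix unit.\<close>
definition matE :: "nat \<Rightarrow> nat \<Rightarrow> nat \<Rightarrow> nat \<Rightarrow> 'a::field" where
  "matE i j = (\<lambda>r s. if r = i \<and> s = j then 1 else 0)"

definition mat_add :: "(nat \<Rightarrow> nat \<Rightarrow> 'a::field) \<Rightarrow> (nat \<Rightarrow> nat \<Rightarrow> 'a) \<Rightarrow> nat \<Rightarrow> nat \<Rightarrow> 'a" where
  "mat_add A B = (\<lambda>r s. A r s + B r s)"

definition dgen :: "(nat \<Rightarrow> nat \<Rightarrow> 'a::field) \<Rightarrow> nat \<Rightarrow> 'a skw" where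
  "dgen M i = (\<lambda>m. \<Sum>j\<in>{1,2,3}. M i j * skw_mult (skw_gen j) (skw_gen j) m)"

fun wprod :: "nat list \<Rightarrow> 'a::field skw" where
  "wprod [] = skw_one"
| "wprod (y # ys) = skw_mult (skw_gen y) (wprod ys)"

text \<open>Graded Leibniz rule on a word of degree-one generators:
  d(y w) = d(y) w - y d(w).\<close>
fun dword :: "(nat \<Rightarrow> nat \<Rightarrow> 'a::field) \<Rightarrow> nat list \<Rightarrow> 'a skw" where
  "dword M [] = (\<lambda>m. 0)"
| "dword M (y # ys) = skw_add (skw_mult (dgen M y) (wprod ys))
                              (skw_smult (-1) (skw_mult (skw_gen y) (dword M ys)))"

fun mword :: "mono \<Rightarrow> nat list" where
  "mword (a1, a2, a3) = replicate a1 1 @ replicate a2 2 @ replicate a3 3"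

text \<open>The differential of A_{O_{-1}(k^3)}(M), extended linearly from monomials.\<close>
definition skw_d :: "(nat \<Rightarrow> nat \<Rightarrow> 'a::field) \<Rightarrow> 'a skw \<Rightarrow> 'a skw" where
  "skw_d M p = (\<lambda>m. \<Sum>a\<in>{a. p a \<noteq> 0}. p a * dword M (mword a) m)"

definition dg_iso :: "(nat \<Rightarrow> nat \<Rightarrow> 'a::field) \<Rightarrow> (nat \<Rightarrow> nat \<Rightarrow> 'a) \<Rightarrow> bool" where
  "dg_iso M N \<longleftrightarrow> (\<exists>f. bij_betw f skw_carrier skw_carrier
     \<and> (\<forall>p\<in>skw_carrier. \<forall>q\<in>skw_carrier. f (skw_add p q) = skw_add (f p) (f q))
     \<and> (\<forall>c. \<forall>p\<in>skw_carrier. f (skw_smult c p) = skw_smult c (f p))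
     \<and> (\<forall>p\<in>skw_carrier. \<forall>q\<in>skw_carrier. f (skw_mult p q) = skw_mult (f p) (f q))
     \<and> f skw_one = skw_one
     \<and> (\<forall>n. \<forall>p\<in>skw_homog n. f p \<in> skw_homog n)
     \<and> (\<forall>p\<in>skw_carrier. f (skw_d M p) = skw_d N (f p)))"

definition alg_closed :: "'a::field itself \<Rightarrow> bool" where
  "alg_closed _ \<longleftrightarrow> (\<forall>p :: 'a poly. degree p \<ge> 1 \<longrightarrow> (\<exists>x. poly p x = 0))"

end

theory Submission
  imports Defs
begin


definition mon :: "mono \<Rightarrow> 'a::field skw" where
  "mon a = (\<lambda>m. if m = a then 1 else 0)"

lemma triple_ext: "(\<And>a b c. f (a,b,c) = g (a,b,c)) \<Longrightarrow> f = g"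
  by (rule ext) (metis prod_cases3)

lemma mult_mon_left:
  "skw_mult (mon (b1,b2,b3)) q (m1,m2,m3) = (if b1 \<le> m1 \<and> b2 \<le> m2 \<and> b3 \<le> m3 then
     (-1)^msign_exp (b1,b2,b3) (m1-b1,m2-b2,m3-b3) * q (m1-b1,m2-b2,m3-b3) else 0)"
proof -
  have e: "\<And>a1 a2 a3 s r. s * mon (b1,b2,b3) (a1,a2,a3) * r =
     (if a3 = b3 then (if a2 = b2 then (if a1 = b1 then s * r else 0) else 0) else 0)"
    by (simp add: mon_def)
  show ?thesis unfolding skw_mult_def
    by (simp only: e prod.case) (cases "b3 \<le> m3"; cases "b2 \<le> m2"; cases "b1 \<le> m1"; simp)
qed

lemma mult_mon_mon:
  "skw_mult (mon (b1,b2,b3)) (mon (c1,c2,c3)) (m1,m2,m3) = (if (m1,m2,m3) = (b1+c1,b2+c2,b3+c3) then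
     (-1)^msign_exp (b1,b2,b3) (c1,c2,c3) else 0)"
  by (simp add: mult_mon_left) (auto simp add: mon_def)

lemma gen_mon: "skw_gen 1 = mon (1,0,0)" "skw_gen (Suc 0) = mon (1,0,0)" "skw_gen 2 = mon (0,1,0)" "skw_gen 3 = mon (0,0,1)"
  unfolding skw_gen_def mon_def by auto

lemma mult_lin_left:
  "skw_mult (\<lambda>m. x * p m + y * p' m) q m = x * skw_mult p q m + y * skw_mult p' q m"
  unfolding skw_mult_def
  by (cases m) (simp add: sum.distrib sum_distrib_left algebra_simps)

lemma mult_zero_left: "skw_mult (\<lambda>m. 0) q = (\<lambda>m. 0)"
  unfolding skw_mult_def by auto
lemma mult_zero_right: "skw_mult p (\<lambda>m. 0) = (\<lambda>m. 0)"
  unfolding skw_mult_def by auto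

definition dclass :: "(nat \<Rightarrow> nat \<Rightarrow> 'a::field) \<Rightarrow> 'a \<Rightarrow> 'a \<Rightarrow> bool" where
  "dclass M \<alpha> \<beta> \<longleftrightarrow> M 1 1 = 0 \<and> M 1 2 = \<alpha> \<and> M 1 3 = \<beta> \<and>
     (\<forall>j. M 2 j = 0 \<and> M 3 j = 0)"

lemma dgen1: "dclass M \<alpha> \<beta> \<Longrightarrow> dgen M 1 = (\<lambda>m. \<alpha> * mon (0,2,0) m + \<beta> * mon (0,0,2) m)"
  apply (rule triple_ext)
  apply (simp add: dgen_def dclass_def gen_mon mult_mon_mon)
  apply (auto simp add: mon_def)
  done

lemma dgen23: "dclass M \<alpha> \<beta> \<Longrightarrow> dgen M 2 = (\<lambda>m. 0)" "dclass M \<alpha> \<beta> \<Longrightarrow> dgen M 3 = (\<lambda>m. 0)"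
  by (auto simp add: dgen_def dclass_def)

lemma wprod3: "wprod (replicate c 3) = mon (0,0,c)"
  apply (induction c)
   apply (simp add: skw_one_def mon_def)
  apply (rule triple_ext)
  apply (simp add: gen_mon mult_mon_left)
  apply (auto simp add: mon_def)
  done

lemma wprod23: "wprod (replicate b 2 @ replicate c 3) = mon (0,b,c)"
  apply (induction b)
   apply (simp add: wprod3)
  apply (rule triple_ext)
  apply (simp add: gen_mon mult_mon_left)
  apply (auto simp add: mon_def)
  done

lemma wprod123: "wprod (replicate a 1 @ replicate b 2 @ replicate c 3) = mon (a,b,c)"
  apply (induction a)
   apply (simp add: wprod23)
  apply (rule triple_ext)
  apply (simp add: gen_mon mult_mon_left)
  apply (auto simp add: mon_def)
  done

lemma dword23: "dclass M \<alpha> \<beta> \<Longrightarrow> dword M (replicate b 2 @ replicate c 3) = (\<lambda>m. 0)"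
proof (induction b)
  case 0
  then show ?case
    by (induction c) (auto simp add: dgen23 mult_zero_left mult_zero_right skw_add_def skw_smult_def)
next
  case (Suc b)
  then show ?case by (auto simp add: dgen23 mult_zero_left mult_zero_right skw_add_def skw_smult_def)
qed

lemma dword123: "dclass M \<alpha> \<beta> \<Longrightarrow> dword M (replicate a 1 @ replicate b 2 @ replicate c 3) =
   (if odd a then (\<lambda>m. \<alpha> * mon (a-1,b+2,c) m + \<beta> * mon (a-1,b,c+2) m) else (\<lambda>m. 0))"
proof (induction a)
  case 0
  then show ?case by (simp add: dword23)
next
  case (Suc a)
  show ?case
    apply (rule triple_ext)
    apply (simp only: replicate_Suc append_Cons dword.simps wprod123 Suc dgen1[OF Suc(2)])
    apply (simp add: skw_add_def skw_smult_def mult_lin_left mult_mon_mon gen_mon mult_mon_left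
       mult_zero_right)
    apply (auto simp add: mon_def dest!: odd_pos)
    done
qed




definition dform :: "'a::field \<Rightarrow> 'a \<Rightarrow> 'a skw \<Rightarrow> 'a skw" where
  "dform \<alpha> \<beta> p = (\<lambda>(m1,m2,m3). if even m1 then
      (if 2 \<le> m2 then \<alpha> * p (m1+1,m2-2,m3) else 0) + (if 2 \<le> m3 then \<beta> * p (m1+1,m2,m3-2) else 0)
     else 0)"

lemma dword_mword: assumes "dclass M \<alpha> \<beta>"
  shows "dword M (mword (a1,a2,a3)) (m1,m2,m3) =
    (if (a1,a2,a3) = (m1+1,m2-2,m3) \<and> even m1 \<and> 2 \<le> m2 then \<alpha> else 0) +
    (if (a1,a2,a3) = (m1+1,m2,m3-2) \<and> even m1 \<and> 2 \<le> m3 then \<beta> else 0)"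
proof (cases "odd a1")
  case True
  have h1: "((m1,m2,m3) = (a1-1,a2+2,a3)) \<longleftrightarrow> ((a1,a2,a3) = (m1+1,m2-2,m3) \<and> even m1 \<and> 2 \<le> m2)"
    using True odd_pos[OF True] by auto
  have h2: "((m1,m2,m3) = (a1-1,a2,a3+2)) \<longleftrightarrow> ((a1,a2,a3) = (m1+1,m2,m3-2) \<and> even m1 \<and> 2 \<le> m3)"
    using True odd_pos[OF True] by auto
  have "dword M (mword (a1,a2,a3)) (m1,m2,m3) = \<alpha> * mon (a1-1,a2+2,a3) (m1,m2,m3) + \<beta> * mon (a1-1,a2,a3+2) (m1,m2,m3)"
    unfolding mword.simps dword123[OF assms] using True by simp
  also have "\<dots> = \<alpha> * (if (m1,m2,m3) = (a1-1,a2+2,a3) then 1 else 0) + \<beta> * (if (m1,m2,m3) = (a1-1,a2,a3+2) then 1 else 0)"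
    by (simp only: mon_def)
  also have "\<dots> = \<alpha> * (if (a1,a2,a3) = (m1+1,m2-2,m3) \<and> even m1 \<and> 2 \<le> m2 then 1 else 0) +
     \<beta> * (if (a1,a2,a3) = (m1+1,m2,m3-2) \<and> even m1 \<and> 2 \<le> m3 then 1 else 0)"
    by (simp only: h1 h2)
  finally show ?thesis by simp
next
  case False
  have n1: "\<not> ((a1,a2,a3) = (m1+1,m2-2,m3) \<and> even m1 \<and> 2 \<le> m2)" using False by auto
  have n2: "\<not> ((a1,a2,a3) = (m1+1,m2,m3-2) \<and> even m1 \<and> 2 \<le> m3)" using False by auto
  show ?thesis unfolding mword.simps dword123[OF assms] using False n1 n2 by (simp only: if_False if_True) simp
qed

lemma skw_d_form: assumes "dclass M \<alpha> \<beta>" "p \<in> skw_carrier"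
  shows "skw_d M p = dform \<alpha> \<beta> p"
proof (rule triple_ext)
  fix m1 m2 m3 :: nat
  define S where "S = {a. p a \<noteq> (0::'a)}"
  define A1 where "A1 = (m1+1,m2-2,m3)"
  define A2 where "A2 = (m1+1,m2,m3-2)"
  define C1 where "C1 = (even m1 \<and> 2 \<le> m2)"
  define C2 where "C2 = (even m1 \<and> 2 \<le> m3)"
  have fin: "finite S" using assms(2) unfolding S_def skw_carrier_def by simp
  have key: "p a * dword M (mword a) (m1,m2,m3) =
     (if a = A1 then (if C1 then \<alpha> * p a else 0) else 0) +
     (if a = A2 then (if C2 then \<beta> * p a else 0) else 0)" for a
  proof -
    obtain a1 a2 a3 where a: "a = (a1,a2,a3)" by (cases a)
    have "p a * dword M (mword a) (m1,m2,m3) = p a * ((if a = A1 \<and> C1 then \<alpha> else 0) + (if a = A2 \<and> C2 then \<beta> else 0))"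
      unfolding a dword_mword[OF assms(1)] A1_def A2_def C1_def C2_def ..
    then show ?thesis by (simp add: distrib_left)
  qed
  have "skw_d M p (m1,m2,m3) = (\<Sum>a\<in>S. p a * dword M (mword a) (m1,m2,m3))"
    unfolding skw_d_def S_def by simp
  also have "\<dots> = (\<Sum>a\<in>S. (if a = A1 then (if C1 then \<alpha> * p a else 0) else 0)) +
     (\<Sum>a\<in>S. (if a = A2 then (if C2 then \<beta> * p a else 0) else 0))"
    unfolding key by (simp only: sum.distrib)
  also have "\<dots> = (if A1 \<in> S then (if C1 then \<alpha> * p A1 else 0) else 0) + (if A2 \<in> S then (if C2 then \<beta> * p A2 else 0) else 0)"
    using fin by (simp only: sum.delta)
  also have "\<dots> = (if C1 then \<alpha> * p A1 else 0) + (if C2 then \<beta> * p A2 else 0)"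
    by (simp add: S_def)
  also have "\<dots> = dform \<alpha> \<beta> p (m1,m2,m3)"
    unfolding dform_def A1_def A2_def C1_def C2_def by simp
  finally show "skw_d M p (m1,m2,m3) = dform \<alpha> \<beta> p (m1,m2,m3)" .
qed

definition scale :: "'a::field \<Rightarrow> 'a \<Rightarrow> 'a \<Rightarrow> 'a skw \<Rightarrow> 'a skw" where
  "scale c1 c2 c3 p = (\<lambda>(a1,a2,a3). c1^a1 * c2^a2 * c3^a3 * p (a1,a2,a3))"

definition sw :: "'a::field skw \<Rightarrow> 'a skw" where
  "sw p = (\<lambda>(a1,a2,a3). (-1)^(a2*a3) * p (a1,a3,a2))"

definition alg_auto :: "('a::field skw \<Rightarrow> 'a skw) \<Rightarrow> bool" where
  "alg_auto f \<longleftrightarrow> bij_betw f skw_carrier skw_carrier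
     \<and> (\<forall>p\<in>skw_carrier. \<forall>q\<in>skw_carrier. f (skw_add p q) = skw_add (f p) (f q))
     \<and> (\<forall>c. \<forall>p\<in>skw_carrier. f (skw_smult c p) = skw_smult c (f p))
     \<and> (\<forall>p\<in>skw_carrier. \<forall>q\<in>skw_carrier. f (skw_mult p q) = skw_mult (f p) (f q))
     \<and> f skw_one = skw_one
     \<and> (\<forall>n. \<forall>p\<in>skw_homog n. f p \<in> skw_homog n)"

lemma dg_isoI:
  assumes "alg_auto f" "dclass M \<alpha> \<beta>" "dclass N \<alpha>' \<beta>'"
    and "\<And>p. f (dform \<alpha> \<beta> p) = dform \<alpha>' \<beta>' (f p)"
  shows "dg_iso M N"
proof -
  have "\<forall>p\<in>skw_carrier. f (skw_d M p) = skw_d N (f p)"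
  proof
    fix p :: "'a skw" assume p: "p \<in> skw_carrier"
    have "bij_betw f skw_carrier skw_carrier" using assms(1) unfolding alg_auto_def by (elim conjE)
    from bij_betw_apply[OF this p] have fp: "f p \<in> skw_carrier" .
    show "f (skw_d M p) = skw_d N (f p)"
      unfolding skw_d_form[OF assms(2) p] skw_d_form[OF assms(3) fp] by (rule assms(4))
  qed
  then show ?thesis using assms(1) unfolding dg_iso_def alg_auto_def
    apply -
    apply (rule exI[of _ f])
    apply (elim conjE)
    apply (intro conjI)
          apply assumption+
    done
qed

lemma alg_autoD: assumes "alg_auto f"
  shows "bij_betw f skw_carrier skw_carrier"
   "\<And>p q. p\<in>skw_carrier \<Longrightarrow> q\<in>skw_carrier \<Longrightarrow> f (skw_add p q) = skw_add (f p) (f q)"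
   "\<And>c p. p\<in>skw_carrier \<Longrightarrow> f (skw_smult c p) = skw_smult c (f p)"
   "\<And>p q. p\<in>skw_carrier \<Longrightarrow> q\<in>skw_carrier \<Longrightarrow> f (skw_mult p q) = skw_mult (f p) (f q)"
   "f skw_one = skw_one"
   "\<And>n p. p\<in>skw_homog n \<Longrightarrow> f p \<in> skw_homog n"
   "\<And>p. p \<in> skw_carrier \<Longrightarrow> f p \<in> skw_carrier"
proof -
  have A: "bij_betw f skw_carrier skw_carrier \<and>
     (\<forall>p\<in>skw_carrier. \<forall>q\<in>skw_carrier. f (skw_add p q) = skw_add (f p) (f q)) \<and>
     (\<forall>c. \<forall>p\<in>skw_carrier. f (skw_smult c p) = skw_smult c (f p)) \<and>
     (\<forall>p\<in>skw_carrier. \<forall>q\<in>skw_carrier. f (skw_mult p q) = skw_mult (f p) (f q)) \<and>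
     f skw_one = skw_one \<and> (\<forall>n. \<forall>p\<in>skw_homog n. f p \<in> skw_homog n)"
    using assms unfolding alg_auto_def .
  show B: "bij_betw f skw_carrier skw_carrier" using A by (elim conjE)
  show "\<And>p q. p\<in>skw_carrier \<Longrightarrow> q\<in>skw_carrier \<Longrightarrow> f (skw_add p q) = skw_add (f p) (f q)"
    using A by (elim conjE) simp
  show "\<And>c p. p\<in>skw_carrier \<Longrightarrow> f (skw_smult c p) = skw_smult c (f p)"
    using A by (elim conjE) simp
  show "\<And>p q. p\<in>skw_carrier \<Longrightarrow> q\<in>skw_carrier \<Longrightarrow> f (skw_mult p q) = skw_mult (f p) (f q)"
    using A by (elim conjE) simp
  show "f skw_one = skw_one" using A by (elim conjE)
  show "\<And>n p. p\<in>skw_homog n \<Longrightarrow> f p \<in> skw_homog n" using A by (elim conjE) simp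
  show "\<And>p. p \<in> skw_carrier \<Longrightarrow> f p \<in> skw_carrier" by (rule bij_betw_apply[OF B])
qed

lemma alg_autoI:
  assumes "bij_betw f skw_carrier skw_carrier"
   "\<And>p q. p\<in>skw_carrier \<Longrightarrow> q\<in>skw_carrier \<Longrightarrow> f (skw_add p q) = skw_add (f p) (f q)"
   "\<And>c p. p\<in>skw_carrier \<Longrightarrow> f (skw_smult c p) = skw_smult c (f p)"
   "\<And>p q. p\<in>skw_carrier \<Longrightarrow> q\<in>skw_carrier \<Longrightarrow> f (skw_mult p q) = skw_mult (f p) (f q)"
   "f skw_one = skw_one"
   "\<And>n p. p\<in>skw_homog n \<Longrightarrow> f p \<in> skw_homog n"
  shows "alg_auto f"
  unfolding alg_auto_def using assms by (intro conjI allI ballI) simp_all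

lemma alg_auto_comp:
  assumes f: "alg_auto f" and g: "alg_auto g" shows "alg_auto (f \<circ> g)"
proof (rule alg_autoI)
  note F = alg_autoD[OF f] and G = alg_autoD[OF g]
  show "bij_betw (f \<circ> g) skw_carrier skw_carrier" by (rule bij_betw_trans[OF G(1) F(1)])
  show "(f \<circ> g) (skw_add p q) = skw_add ((f \<circ> g) p) ((f \<circ> g) q)" if "p\<in>skw_carrier" "q\<in>skw_carrier" for p q
    using that by (simp add: F(2) G(2) G(7))
  show "(f \<circ> g) (skw_smult c p) = skw_smult c ((f \<circ> g) p)" if "p\<in>skw_carrier" for c p
    using that by (simp add: F(3) G(3) G(7))
  show "(f \<circ> g) (skw_mult p q) = skw_mult ((f \<circ> g) p) ((f \<circ> g) q)" if "p\<in>skw_carrier" "q\<in>skw_carrier" for p q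
    using that by (simp add: F(4) G(4) G(7))
  show "(f \<circ> g) skw_one = skw_one" by (simp add: F(5) G(5))
  show "(f \<circ> g) p \<in> skw_homog n" if "p \<in> skw_homog n" for n p
    using that by (simp add: F(6) G(6))
qed

lemma neg1_pow_add2: "(-1::'a::field) ^ (x + 2 * k) = (-1) ^ x"
  by (simp add: power_add power_mult)

lemma scale_mult: "scale c1 c2 c3 (skw_mult p q) = skw_mult (scale c1 c2 c3 p) (scale c1 c2 c3 q)"
proof (rule triple_ext)
  fix m1 m2 m3 :: nat
  have t: "s * (c1^a1 * c2^a2 * c3^a3 * P) * (c1^(m1-a1) * c2^(m2-a2) * c3^(m3-a3) * Q) =
     c1^m1 * c2^m2 * c3^m3 * (s * P * Q)"
    if "a1 \<le> m1" "a2 \<le> m2" "a3 \<le> m3" for a1 a2 a3 and s P Q :: 'a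
  proof -
    have "c1^m1 = c1^a1 * c1^(m1-a1)" "c2^m2 = c2^a2 * c2^(m2-a2)" "c3^m3 = c3^a3 * c3^(m3-a3)"
      using that by (simp_all add: power_add[symmetric])
    then show ?thesis by (simp only: ac_simps)
  qed
  show "scale c1 c2 c3 (skw_mult p q) (m1,m2,m3) = skw_mult (scale c1 c2 c3 p) (scale c1 c2 c3 q) (m1,m2,m3)"
    unfolding scale_def skw_mult_def
    apply (simp add: sum_distrib_left)
    apply (intro sum.cong refl)
    apply (rule t[symmetric]; simp)
    done
qed

lemma sign_sw:
  assumes "a2 \<le> m2" "a3 \<le> m3"
  shows "(-1::'a::field)^(m2*m3) * (-1)^msign_exp (a1,a3,a2) (r1,m3-a3,m2-a2) =
    (-1)^msign_exp (a1,a2,a3) (r1,m2-a2,m3-a3) * (-1)^(a2*a3) * (-1)^((m2-a2)*(m3-a3))"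
proof -
  obtain r2 r3 where m: "m2 = a2 + r2" "m3 = a3 + r3" using assms le_Suc_ex by blast
  have "m2*m3 + msign_exp (a1,a3,a2) (r1,m3-a3,m2-a2) =
     (msign_exp (a1,a2,a3) (r1,m2-a2,m3-a3) + a2*a3 + (m2-a2)*(m3-a3)) + 2 * (a2*r3)"
    unfolding m by (simp add: algebra_simps)
  then have "(-1::'a)^(m2*m3 + msign_exp (a1,a3,a2) (r1,m3-a3,m2-a2)) =
     (-1)^(msign_exp (a1,a2,a3) (r1,m2-a2,m3-a3) + a2*a3 + (m2-a2)*(m3-a3))"
    by (simp only: neg1_pow_add2)
  then show ?thesis by (simp only: power_add)
qed

lemma sw_mult: "sw (skw_mult p q) = skw_mult (sw p) (sw q)"
proof (rule triple_ext)
  fix m1 m2 m3 :: nat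
  have "sw (skw_mult p q) (m1,m2,m3) = (\<Sum>a1\<le>m1. \<Sum>b2\<le>m3. \<Sum>b3\<le>m2. (-1)^(m2*m3) *
     ((-1)^msign_exp (a1,b2,b3) (m1-a1,m3-b2,m2-b3) * p (a1,b2,b3) * q (m1-a1,m3-b2,m2-b3)))"
    unfolding sw_def skw_mult_def by (simp add: sum_distrib_left)
  also have "\<dots> = (\<Sum>a1\<le>m1. \<Sum>b3\<le>m2. \<Sum>b2\<le>m3. (-1)^(m2*m3) *
     ((-1)^msign_exp (a1,b2,b3) (m1-a1,m3-b2,m2-b3) * p (a1,b2,b3) * q (m1-a1,m3-b2,m2-b3)))"
    by (rule sum.cong[OF refl]) (rule sum.swap)
  also have "\<dots> = skw_mult (sw p) (sw q) (m1,m2,m3)"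
    unfolding sw_def skw_mult_def
    apply (simp only: prod.case)
    apply (intro sum.cong refl)
  proof -
    fix a1 a2 a3 assume "a2 \<in> {..m2}" "a3 \<in> {..m3}"
    then have "a2 \<le> m2" "a3 \<le> m3" by auto
    note e = sign_sw[OF this, of a1 "m1-a1"]
    let ?A = "(-1::'a)^(m2*m3)" and ?B = "(-1::'a)^msign_exp (a1,a3,a2) (m1-a1,m3-a3,m2-a2)"
      and ?C = "(-1::'a)^msign_exp (a1,a2,a3) (m1-a1,m2-a2,m3-a3)" and ?D = "(-1::'a)^(a2*a3)"
      and ?E = "(-1::'a)^((m2-a2)*(m3-a3))" and ?P = "p (a1,a3,a2)" and ?Q = "q (m1-a1,m3-a3,m2-a2)"
    have "?A * (?B * ?P * ?Q) = (?A * ?B) * (?P * ?Q)" by (simp only: ac_simps)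
    also have "\<dots> = (?C * ?D * ?E) * (?P * ?Q)" by (simp only: e)
    also have "\<dots> = ?C * (?D * ?P) * (?E * ?Q)" by (simp only: ac_simps)
    finally show "?A * (?B * ?P * ?Q) = ?C * (?D * ?P) * (?E * ?Q)" .
  qed
  finally show "sw (skw_mult p q) (m1,m2,m3) = skw_mult (sw p) (sw q) (m1,m2,m3)" .
qed


lemma scale_scale: "scale a1 a2 a3 (scale b1 b2 b3 p) = scale (a1*b1) (a2*b2) (a3*b3) p"
  by (rule triple_ext) (simp add: scale_def power_mult_distrib ac_simps)

lemma scale_111: "scale 1 1 1 p = p"
  by (rule triple_ext) (simp add: scale_def)

lemma scale_supp: "{a. scale c1 c2 c3 p a \<noteq> 0} \<subseteq> {a. p a \<noteq> 0}"
proof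
  fix x assume "x \<in> {a. scale c1 c2 c3 p a \<noteq> 0}"
  moreover obtain a1 a2 a3 where x: "x = (a1,a2,a3)" by (cases x)
  ultimately show "x \<in> {a. p a \<noteq> 0}" by (simp add: scale_def)
qed

lemma scale_carrier: "p \<in> skw_carrier \<Longrightarrow> scale c1 c2 c3 p \<in> skw_carrier"
proof -
  assume "p \<in> skw_carrier"
  then have "finite {a. p a \<noteq> 0}" by (simp add: skw_carrier_def)
  then have "finite {a. scale c1 c2 c3 p a \<noteq> 0}" by (rule finite_subset[OF scale_supp])
  then show ?thesis by (simp add: skw_carrier_def)
qed

lemma alg_auto_scale:
  assumes "c1 \<noteq> 0" "c2 \<noteq> 0" "c3 \<noteq> 0"
  shows "alg_auto (scale c1 c2 c3)"
proof (rule alg_autoI)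
  show "bij_betw (scale c1 c2 c3) skw_carrier skw_carrier"
  proof (rule bij_betw_byWitness[where f'="scale (inverse c1) (inverse c2) (inverse c3)"])
    show "\<forall>a\<in>skw_carrier. scale (inverse c1) (inverse c2) (inverse c3) (scale c1 c2 c3 a) = a"
      by (simp only: scale_scale left_inverse[OF assms(1)] left_inverse[OF assms(2)] left_inverse[OF assms(3)] scale_111) simp
    show "\<forall>a\<in>skw_carrier. scale c1 c2 c3 (scale (inverse c1) (inverse c2) (inverse c3) a) = a"
      by (simp only: scale_scale right_inverse[OF assms(1)] right_inverse[OF assms(2)] right_inverse[OF assms(3)] scale_111) simp
    show "scale c1 c2 c3 ` skw_carrier \<subseteq> skw_carrier" using scale_carrier by blast
    show "scale (inverse c1) (inverse c2) (inverse c3) ` skw_carrier \<subseteq> skw_carrier" using scale_carrier by blast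
  qed
  show "scale c1 c2 c3 (skw_add p q) = skw_add (scale c1 c2 c3 p) (scale c1 c2 c3 q)" for p q
    by (rule triple_ext) (simp add: scale_def skw_add_def algebra_simps)
  show "scale c1 c2 c3 (skw_smult c p) = skw_smult c (scale c1 c2 c3 p)" for c p
    by (rule triple_ext) (simp add: scale_def skw_smult_def algebra_simps)
  show "scale c1 c2 c3 (skw_mult p q) = skw_mult (scale c1 c2 c3 p) (scale c1 c2 c3 q)" for p q
    by (rule scale_mult)
  show "scale c1 c2 c3 skw_one = skw_one"
    by (rule triple_ext) (simp add: scale_def skw_one_def)
  show "scale c1 c2 c3 p \<in> skw_homog n" if "p \<in> skw_homog n" for n p
  proof -
    have "scale c1 c2 c3 p \<in> skw_carrier" using that scale_carrier unfolding skw_homog_def by blast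
    moreover have "mdeg a = n" if "scale c1 c2 c3 p a \<noteq> 0" for a
    proof -
      have "p a \<noteq> 0" using that scale_supp by blast
      then show ?thesis using \<open>p \<in> skw_homog n\<close> unfolding skw_homog_def by blast
    qed
    ultimately show ?thesis unfolding skw_homog_def by blast
  qed
qed

lemma neg1_sq: "(-1::'a::field)^n * (-1)^n = 1"
  by (simp add: power_mult_distrib[symmetric])

lemma sw_sw: "sw (sw p) = p"
proof (rule triple_ext)
  fix a b c :: nat
  have "(-1::'a)^(b*c) * (-1)^(c*b) = 1" using neg1_sq[of "b*c"] by (simp add: mult.commute)
  then show "sw (sw p) (a,b,c) = p (a,b,c)" unfolding sw_def by (simp add: mult.assoc[symmetric])
qed

lemma sw_supp: "{a. sw p a \<noteq> 0} \<subseteq> (\<lambda>(a1,a2,a3). (a1,a3,a2)) ` {a. p a \<noteq> 0}"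
proof
  fix x assume "x \<in> {a. sw p a \<noteq> 0}"
  moreover obtain a1 a2 a3 where x: "x = (a1,a2,a3)" by (cases x)
  ultimately have "p (a1,a3,a2) \<noteq> 0" by (simp add: sw_def)
  then show "x \<in> (\<lambda>(a1,a2,a3). (a1,a3,a2)) ` {a. p a \<noteq> 0}"
    unfolding x by (auto intro!: image_eqI[where x="(a1,a3,a2)"])
qed

lemma sw_carrier: "p \<in> skw_carrier \<Longrightarrow> sw p \<in> skw_carrier"
proof -
  assume "p \<in> skw_carrier"
  then have "finite {a. p a \<noteq> 0}" by (simp add: skw_carrier_def)
  then have "finite ((\<lambda>(a1,a2,a3). (a1,a3,a2)) ` {a. p a \<noteq> 0})" by (rule finite_imageI)
  then have "finite {a. sw p a \<noteq> 0}" by (rule finite_subset[OF sw_supp])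
  then show ?thesis by (simp add: skw_carrier_def)
qed

lemma alg_auto_sw: "alg_auto sw"
proof (rule alg_autoI)
  show "bij_betw sw skw_carrier skw_carrier"
    by (rule bij_betw_byWitness[where f'=sw]) (auto simp: sw_sw sw_carrier)
  show "sw (skw_add p q) = skw_add (sw p) (sw q)" for p q
    by (rule triple_ext) (simp add: sw_def skw_add_def algebra_simps)
  show "sw (skw_smult c p) = skw_smult c (sw p)" for c p
    by (rule triple_ext) (simp add: sw_def skw_smult_def algebra_simps)
  show "sw (skw_mult p q) = skw_mult (sw p) (sw q)" for p q
    by (rule sw_mult)
  show "sw skw_one = skw_one"
    by (rule triple_ext) (auto simp add: sw_def skw_one_def)
  show "sw p \<in> skw_homog n" if "p \<in> skw_homog n" for n p
  proof -
    have "sw p \<in> skw_carrier" using that sw_carrier unfolding skw_homog_def by blast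
    moreover have "mdeg a = n" if "sw p a \<noteq> 0" for a
    proof -
      obtain a1 a2 a3 where a: "a = (a1,a2,a3)" by (cases a)
      have "p (a1,a3,a2) \<noteq> 0" using that a by (simp add: sw_def)
      then have "mdeg (a1,a3,a2) = n" using \<open>p \<in> skw_homog n\<close> unfolding skw_homog_def by blast
      then show ?thesis unfolding a by simp
    qed
    ultimately show ?thesis unfolding skw_homog_def by blast
  qed
qed

lemma scale_dform:
  assumes "c2^2 * \<alpha> = c1 * \<alpha>'" "c3^2 * \<beta> = c1 * \<beta>'"
  shows "scale c1 c2 c3 (dform \<alpha> \<beta> p) = dform \<alpha>' \<beta>' (scale c1 c2 c3 p)"
proof (rule triple_ext)
  fix m1 m2 m3 :: nat
  have X: "c1^m1*c2^m2*c3^m3*(\<alpha>*P) = \<alpha>' * (c1^(m1+1)*c2^(m2-2)*c3^m3 * P)" if "2 \<le> m2" for P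
  proof -
    obtain k where k: "m2 = k + 2" using \<open>2 \<le> m2\<close> by (metis add.commute le_Suc_ex)
    have "c1^m1*c2^m2*c3^m3*(\<alpha>*P) = c1^m1*c2^k*c3^m3*P*(c2^2*\<alpha>)"
      unfolding k by (simp only: power_add ac_simps)
    also have "\<dots> = \<alpha>' * (c1^(m1+1)*c2^(m2-2)*c3^m3 * P)"
      unfolding assms k by (simp add: ac_simps)
    finally show ?thesis .
  qed
  have Y: "c1^m1*c2^m2*c3^m3*(\<beta>*P) = \<beta>' * (c1^(m1+1)*c2^m2*c3^(m3-2) * P)" if "2 \<le> m3" for P
  proof -
    obtain k where k: "m3 = k + 2" using \<open>2 \<le> m3\<close> by (metis add.commute le_Suc_ex)
    have "c1^m1*c2^m2*c3^m3*(\<beta>*P) = c1^m1*c2^m2*c3^k*P*(c3^2*\<beta>)"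
      unfolding k by (simp only: power_add ac_simps)
    also have "\<dots> = \<beta>' * (c1^(m1+1)*c2^m2*c3^(m3-2) * P)"
      unfolding assms k by (simp add: ac_simps)
    finally show ?thesis .
  qed
  show "scale c1 c2 c3 (dform \<alpha> \<beta> p) (m1,m2,m3) = dform \<alpha>' \<beta>' (scale c1 c2 c3 p) (m1,m2,m3)"
    unfolding scale_def dform_def
    by (simp add: distrib_left X Y)
qed

lemma sw_dform: "sw (dform \<alpha> \<beta> p) = dform \<beta> \<alpha> (sw p)"
proof (rule triple_ext)
  fix m1 m2 m3 :: nat
  have S1: "(-1::'a)^((m2-2)*m3) = (-1)^(m2*m3)" if "2 \<le> m2"
  proof -
    have "m2*m3 = (m2-2)*m3 + 2*m3" using that by (simp add: algebra_simps)
    then show ?thesis by (simp only: neg1_pow_add2)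
  qed
  have S2: "(-1::'a)^(m2*(m3-2)) = (-1)^(m2*m3)" if "2 \<le> m3"
  proof -
    have "m2*m3 = m2*(m3-2) + 2*m2" using that by (simp add: algebra_simps)
    then show ?thesis by (simp only: neg1_pow_add2)
  qed
  show "sw (dform \<alpha> \<beta> p) (m1,m2,m3) = dform \<beta> \<alpha> (sw p) (m1,m2,m3)"
  proof -
    have S1c: "(-1::'a)^(m3*(m2-2)) = (-1)^(m2*m3)" if "2 \<le> m2" using S1[OF that] by (simp only: mult.commute)
    have S2c: "(-1::'a)^((m3-2)*m2) = (-1)^(m2*m3)" if "2 \<le> m3" using S2[OF that] by (simp only: mult.commute)
    show ?thesis unfolding sw_def dform_def
      by (simp add: S1 S2 S1c S2c distrib_left ac_simps)
  qed
qed

lemma sqrt_ex: assumes "alg_closed TYPE('a::field)" shows "\<exists>x::'a. x^2 = u"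
proof -
  have "degree [:-u, 0, 1:] \<ge> 1" by simp
  then obtain x where "poly [:-u, 0, 1:] x = 0" using assms unfolding alg_closed_def by blast
  then have "x * x - u = 0" by (simp add: algebra_simps)
  then show ?thesis by (auto simp: power2_eq_square)
qed


theorem lemma7p1:
  fixes m11 m12 m13 l1 l2 :: "'a::field_char_0"
    and M :: "nat \<Rightarrow> nat \<Rightarrow> 'a"
  assumes "alg_closed TYPE('a)"
    and "(m11, m12, m13) \<noteq> (0, 0, 0)"
    and "m12 * l1^2 + m13 * l2^2 = m11"
    and "l1 = 0" and "l2 = 0"
    and "M = (\<lambda>i j. (if i = 1 then 1 else if i = 2 then l1 else if i = 3 then l2 else 0)
                   * (if j = 1 then m11 else if j = 2 then m12 else if j = 3 then m13 else 0))"
  shows "(m12 \<noteq> 0 \<and> m13 \<noteq> 0 \<longrightarrow> dg_iso M (mat_add (matE 1 2) (matE 1 3)))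
       \<and> ((m13 = 0 \<and> m12 \<noteq> 0) \<or> (m12 = 0 \<and> m13 \<noteq> 0) \<longrightarrow> dg_iso M (matE 1 2))"
proof -
  have m11: "m11 = 0" using assms(3,4,5) by simp
  have DM: "dclass M m12 m13" unfolding dclass_def assms(6) using m11 assms(4,5) by simp
  have DN1: "dclass (mat_add (matE 1 2) (matE 1 3)) (1::'a) 1"
    unfolding dclass_def mat_add_def matE_def by simp
  have DN2: "dclass (matE 1 2) (1::'a) 0"
    unfolding dclass_def matE_def by simp
  have P1: "dg_iso M (mat_add (matE 1 2) (matE 1 3))" if h: "m12 \<noteq> 0" "m13 \<noteq> 0"
  proof -
    obtain s :: 'a where s: "s^2 = inverse m12" using sqrt_ex[OF assms(1)] by blast
    obtain t :: 'a where t: "t^2 = inverse m13" using sqrt_ex[OF assms(1)] by blast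
    have s0: "s \<noteq> 0" using s h by auto
    have t0: "t \<noteq> 0" using t h by auto
    show ?thesis
    proof (rule dg_isoI[OF alg_auto_scale[of 1 s t] DM DN1])
      show "(1::'a) \<noteq> 0" "s \<noteq> 0" "t \<noteq> 0" using s0 t0 by auto
      show "scale 1 s t (dform m12 m13 p) = dform 1 1 (scale 1 s t p)" for p
        by (rule scale_dform) (simp_all add: s t h)
    qed
  qed
  have P2: "dg_iso M (matE 1 2)" if h: "m13 = 0" "m12 \<noteq> 0"
  proof (rule dg_isoI[OF alg_auto_scale[of m12 1 1] DM DN2])
    show "m12 \<noteq> 0" "(1::'a) \<noteq> 0" "(1::'a) \<noteq> 0" using h by auto
    show "scale m12 1 1 (dform m12 m13 p) = dform 1 0 (scale m12 1 1 p)" for p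
      by (rule scale_dform) (simp_all add: h)
  qed
  have P3: "dg_iso M (matE 1 2)" if h: "m12 = 0" "m13 \<noteq> 0"
  proof (rule dg_isoI[OF alg_auto_comp[OF alg_auto_scale[of m13 1 1] alg_auto_sw] DM DN2])
    show "m13 \<noteq> 0" "(1::'a) \<noteq> 0" "(1::'a) \<noteq> 0" using h by auto
    show "(scale m13 1 1 \<circ> sw) (dform m12 m13 p) = dform 1 0 ((scale m13 1 1 \<circ> sw) p)" for p
    proof -
      have "(scale m13 1 1 \<circ> sw) (dform m12 m13 p) = scale m13 1 1 (dform m13 m12 (sw p))"
        by (simp add: sw_dform)
      also have "\<dots> = dform 1 0 (scale m13 1 1 (sw p))"
        by (rule scale_dform) (simp_all add: h)
      finally show ?thesis by simp
    qed
  qed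
  show ?thesis using P1 P2 P3 by blast
qed

end
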